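(* Let $d\in\mathbb{N}$ and let $\mathcal{P}$ be a unit hypercube partition of $\mathbb{R}^{d}$. Then there exists $\vec{p}\in\mathbb{R}^{d}$ such that $|\mathcal{N}_{\overline{0}}(\vec{p})|\geq d+1$. Furthermore, $\mathcal{P}$ contains a $(d+1)$-clique.
   Context: A unit hypercube is a set $\vec{a}+[0,1)^d$ with $\vec{a}\in\mathbb{R}^d$; a unit hypercube partition of $\mathbb{R}^d$ is a partition all of whose members are unit hypercubes. For a partition $\mathcal{P}$ of $\mathbb{R}^d$ and $\vec{p}\in\mathbb{R}^d$, $\mathcal{N}_{\overline{0}}(\vec{p})=\{X\in\mathcal{P}:\vec{p}\in\overline{X}\}$, where $\overline{X}$ is the closure (in the usual topology). Two members $X,Y\in\mathcal{P}$ are adjacent if $\overline{X}\cap\overline{Y}\neq\emptyset$; an $n$-clique in $\mathcal{P}$ is a set of $n$ distinct members that are pairwise adjacent. *)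

theory Defs
  imports "HOL-Analysis.Analysis"
begin

text \<open>Points of R^d are represented as functions nat => real vanishing outside {..<d};
  nat => real carries the product topology (HOL-Analysis Function_Topology), and
  the copy of R^d is a closed subspace homeomorphic to the Euclidean R^d.\<close>

definition Rd :: "nat \<Rightarrow> (nat \<Rightarrow> real) set" where
  "Rd d = {x. \<forall>i\<ge>d. x i = 0}"

definition unit_cube :: "nat \<Rightarrow> (nat \<Rightarrow> real) \<Rightarrow> (nat \<Rightarrow> real) set" where
  "unit_cube d a = {x \<in> Rd d. \<forall>i<d. a i \<le> x i \<and> x i < a i + 1}"

definition is_unit_cube :: "nat \<Rightarrow> (nat \<Rightarrow> real) set \<Rightarrow> bool" where
  "is_unit_cube d X \<longleftrightarrow> (\<exists>a\<in>Rd d. X = unit_cube d a)"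

definition is_partition_of :: "'a set set \<Rightarrow> 'a set \<Rightarrow> bool" where
  "is_partition_of P S \<longleftrightarrow> (\<forall>X\<in>P. X \<noteq> {}) \<and> \<Union>P = S \<and>
     (\<forall>X\<in>P. \<forall>Y\<in>P. X \<noteq> Y \<longrightarrow> X \<inter> Y = {})"

definition unit_cube_partition :: "nat \<Rightarrow> (nat \<Rightarrow> real) set set \<Rightarrow> bool" where
  "unit_cube_partition d P \<longleftrightarrow> is_partition_of P (Rd d) \<and> (\<forall>X\<in>P. is_unit_cube d X)"

definition closed_nbhd :: "'a::topological_space set set \<Rightarrow> 'a \<Rightarrow> 'a set set" where
  "closed_nbhd P p = {X \<in> P. p \<in> closure X}"

definition adjacent :: "'a::topological_space set \<Rightarrow> 'a set \<Rightarrow> bool" where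
  "adjacent X Y \<longleftrightarrow> closure X \<inter> closure Y \<noteq> {}"

definition is_clique :: "'a::topological_space set set \<Rightarrow> nat \<Rightarrow> 'a set set \<Rightarrow> bool" where
  "is_clique P n C \<longleftrightarrow> C \<subseteq> P \<and> finite C \<and> card C = n \<and>
     (\<forall>X\<in>C. \<forall>Y\<in>C. adjacent X Y)"

end

theory Submission
  imports Defs
begin

lemma mem_cube: "x \<in> unit_cube d b \<longleftrightarrow> x \<in> Rd d \<and> (\<forall>i<d. b i \<le> x i \<and> x i < b i + 1)"
  by (simp add: unit_cube_def)

lemma closure_cube:
  "closure (unit_cube d b) = {x\<in>Rd d. \<forall>i<d. b i \<le> x i \<and> x i \<le> b i + 1}"
proof -
  have e: "unit_cube d b = PiE UNIV (\<lambda>i. if i<d then {b i..<b i+1} else {0})"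
proof (rule set_eqI)
  fix x :: "nat \<Rightarrow> real"
  have "x \<in> PiE UNIV (\<lambda>i. if i<d then {b i..<b i+1} else {0}) \<longleftrightarrow> (\<forall>i. x i \<in> (if i<d then {b i..<b i+1} else {0}))"
    by (simp add: PiE_UNIV_domain Pi_iff)
  also have "\<dots> \<longleftrightarrow> x \<in> unit_cube d b"
    unfolding unit_cube_def Rd_def by (auto simp: not_less[symmetric])
  finally show "x \<in> unit_cube d b \<longleftrightarrow> x \<in> PiE UNIV (\<lambda>i. if i<d then {b i..<b i+1} else {0})" by simp
qed
  have "closure (unit_cube d b) = euclidean closure_of (unit_cube d b)" by simp
  also have "\<dots> = product_topology (\<lambda>i. euclidean) UNIV closure_of
      PiE UNIV (\<lambda>i. if i<d then {b i..<b i+1} else {0::real})"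
    by (simp only: e euclidean_product_topology)
  also have "\<dots> = PiE UNIV (\<lambda>i. closure (if i<d then {b i..<b i+1} else {0::real}))"
    by (simp add: closure_of_product_topology)
  also have "\<dots> = PiE UNIV (\<lambda>i. if i<d then {b i..b i+1} else {0::real})"
    by (intro PiE_cong) auto
  also have "\<dots> = {x\<in>Rd d. \<forall>i<d. b i \<le> x i \<and> x i \<le> b i + 1}"
  proof (rule set_eqI)
  fix x :: "nat \<Rightarrow> real"
  have "x \<in> PiE UNIV (\<lambda>i. if i<d then {b i..b i+1} else {0}) \<longleftrightarrow> (\<forall>i. x i \<in> (if i<d then {b i..b i+1} else {0}))"
    by (simp add: PiE_UNIV_domain Pi_iff)
  also have "\<dots> \<longleftrightarrow> x \<in> {x\<in>Rd d. \<forall>i<d. b i \<le> x i \<and> x i \<le> b i + 1}"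
    unfolding Rd_def by (auto simp: not_less[symmetric])
  finally show "x \<in> PiE UNIV (\<lambda>i. if i<d then {b i..b i+1} else {0}) \<longleftrightarrow> x \<in> {x\<in>Rd d. \<forall>i<d. b i \<le> x i \<and> x i \<le> b i + 1}" .
qed
  finally show ?thesis .
qed

theorem mainTheorem2:
  fixes d :: nat and P :: "(nat \<Rightarrow> real) set set"
  assumes "unit_cube_partition d P"
  shows "(\<exists>p\<in>Rd d. \<exists>S\<subseteq>closed_nbhd P p. finite S \<and> card S = d + 1)
         \<and> (\<exists>C. is_clique P (d + 1) C)"
proof -
  have cover: "\<And>x. x \<in> Rd d \<Longrightarrow> \<exists>X\<in>P. x \<in> X"
    using assms unfolding unit_cube_partition_def is_partition_of_def by blast
  have disj: "\<And>X Y x. X \<in> P \<Longrightarrow> Y \<in> P \<Longrightarrow> x \<in> X \<Longrightarrow> x \<in> Y \<Longrightarrow> X = Y"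
    using assms unfolding unit_cube_partition_def is_partition_of_def by blast
  have cube: "\<And>X. X \<in> P \<Longrightarrow> \<exists>a\<in>Rd d. X = unit_cube d a"
    using assms unfolding unit_cube_partition_def is_unit_cube_def by blast
  have "(\<lambda>_. 0) \<in> Rd d" by (simp add: Rd_def)
  then obtain X0 where X0P: "X0 \<in> P" using cover by blast
  then obtain p where X0: "X0 = unit_cube d p" and pR: "p \<in> Rd d" using cube by blast
  have pX0: "p \<in> X0" using X0 pR by (simp add: mem_cube)
  have key: "\<exists>Y\<in>P. p \<in> closure Y \<and> (\<exists>b. Y = unit_cube d b \<and> b i = p i - 1 \<and>
              (\<forall>j<d. j \<noteq> i \<longrightarrow> b j \<le> p j \<and> p j < b j + 1))" if iD: "i < d" for i
  proof -
    define q where "q t = p(i := p i - t)" for t :: real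
    have qR: "q t \<in> Rd d" for t using pR iD by (auto simp: q_def Rd_def)
    have up: "c i + 1 \<le> p i" if "t > 0" "Z \<in> P" "Z = unit_cube d c" "q t \<in> Z" for t Z c
    proof (rule ccontr)
      assume "\<not> c i + 1 \<le> p i"
      moreover have "\<forall>j<d. c j \<le> q t j \<and> q t j < c j + 1" using that mem_cube by blast
      ultimately have "\<forall>j<d. c j \<le> p j \<and> p j < c j + 1" using \<open>t > 0\<close>
        unfolding q_def by (smt (verit) fun_upd_apply)
      then have "p \<in> Z" using that pR mem_cube by blast
      then have "Z = X0" using disj X0P pX0 that by blast
      then have "q t \<in> unit_cube d p" using that X0 by simp
      then have "p i \<le> q t i" using iD mem_cube by blast
      then show False using \<open>t > 0\<close> by (simp add: q_def)
    qed
    obtain Y where YP: "Y \<in> P" and qY: "q (1/2) \<in> Y" using cover qR by blast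
    obtain b where Yb: "Y = unit_cube d b" using cube YP by blast
    have b1: "b i + 1 \<le> p i" using up[OF _ YP Yb qY] by simp
    have bj: "\<forall>j<d. j \<noteq> i \<longrightarrow> b j \<le> p j \<and> p j < b j + 1"
      using qY unfolding Yb mem_cube q_def by auto
    have bi: "b i \<le> p i - 1/2 \<and> p i - 1/2 < b i + 1"
      using qY iD unfolding Yb mem_cube q_def by auto
    have b2: "\<not> b i < p i - 1"
    proof
      assume lt: "b i < p i - 1"
      define t' where "t' = p i - 1 - b i"
      have t'0: "t' > 0" "t' < 1/2" using lt bi by (auto simp: t'_def)
      obtain Y' where Y'P: "Y' \<in> P" and qY': "q t' \<in> Y'" using cover qR by blast
      obtain b' where Yb': "Y' = unit_cube d b'" using cube Y'P by blast
      have b'1: "b' i + 1 \<le> p i" using up[OF _ Y'P Yb' qY'] t'0 by simp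
      have b'j: "\<forall>j<d. j \<noteq> i \<longrightarrow> b' j \<le> p j \<and> p j < b' j + 1"
        using qY' unfolding Yb' mem_cube q_def by auto
      have b'i: "b' i \<le> p i - t' \<and> p i - t' < b' i + 1"
        using qY' iD unfolding Yb' mem_cube q_def by auto
      define w where "w = p(i := b' i)"
      have wR: "w \<in> Rd d" using pR iD by (auto simp: w_def Rd_def)
      have "w \<in> Y'" unfolding Yb' mem_cube using wR b'j by (auto simp: w_def)
      moreover have "w \<in> Y" unfolding Yb mem_cube using wR bj b'i b'1 t'0
        by (auto simp: w_def t'_def)
      ultimately have "Y = Y'" using disj YP Y'P by blast
      moreover have "q t' \<notin> Y" unfolding Yb mem_cube q_def using iD
        by (auto simp: t'_def)
      ultimately show False using qY' by simp
    qed
    have "b i = p i - 1" using b1 b2 by simp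
    moreover have "p \<in> closure Y" unfolding Yb closure_cube using pR bj \<open>b i = p i - 1\<close>
      by force
    ultimately show ?thesis using YP Yb bj by blast
  qed
  obtain Yf where Yf: "\<And>i. i < d \<Longrightarrow> Yf i \<in> P \<and> p \<in> closure (Yf i) \<and>
      (\<exists>b. Yf i = unit_cube d b \<and> b i = p i - 1 \<and>
              (\<forall>j<d. j \<noteq> i \<longrightarrow> b j \<le> p j \<and> p j < b j + 1))"
    using key by metis
  have notX0: "Yf i \<noteq> X0" if "i < d" for i
  proof
    assume "Yf i = X0"
    then have "p \<in> Yf i" using pX0 by simp
    then show False using Yf[OF that] that by (auto simp: mem_cube) (metis less_irrefl diff_add_cancel)
  qed
  have inj: "inj_on Yf {..<d}"
  proof (rule inj_onI, rule ccontr)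
    fix i k assume ik: "i \<in> {..<d}" "k \<in> {..<d}" "Yf i = Yf k" "i \<noteq> k"
    define z where "z = p(k := p k - 1/2)"
    have zR: "z \<in> Rd d" using pR ik by (auto simp: z_def Rd_def)
    have "z \<in> Yf k" using Yf[of k] ik zR by (auto simp: mem_cube z_def)
    moreover have "z \<notin> Yf i"
    proof -
      obtain b where b: "Yf i = unit_cube d b" "b i = p i - 1" using Yf[of i] ik by auto
      have "z i = p i" using ik by (simp add: z_def)
      then have "\<not> z i < b i + 1" using b by simp
      then show ?thesis using b(1) ik mem_cube by auto
    qed
    ultimately show False using ik by simp
  qed
  define S where "S = insert X0 (Yf ` {..<d})"
  have SP: "S \<subseteq> P" using Yf X0P by (auto simp: S_def)
  have Scl: "\<And>X. X \<in> S \<Longrightarrow> p \<in> closure X"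
    using Yf pX0 closure_subset by (auto simp: S_def) blast
  have fin: "finite S" by (simp add: S_def)
  have card: "card S = d + 1"
    unfolding S_def using notX0 inj by (subst card_insert_disjoint) (auto simp: card_image)
  have "S \<subseteq> closed_nbhd P p" using SP Scl by (auto simp: closed_nbhd_def)
  moreover have "is_clique P (d + 1) S"
    unfolding is_clique_def adjacent_def using SP fin card Scl by blast
  ultimately show ?thesis using pR fin card by blast
qed
end
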